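(* Let $m>1$ be odd, $G=\mathbb{Z}_2\times\mathbb{Z}_m$, and let $k_2,\ldots,k_{2m-1}\in\{0,1\}$. Let $\psi=\lambda\prod_{j=2}^{2m-1}\partial_j^{k_j}\in Z^2(G,\langle-1\rangle)$. Then $\psi$ is quasi-orthogonal if and only if \[ B=\{j-1: 2\le j\le m,\ k_j=1\},\qquad D=\{j-m-1: m+1\le j\le 2m-1,\ k_j=1\} \] (as subsets of $\mathbb{Z}_m$) are $2$-$\{m;|B|,|D|;|B|+|D|-\frac{m+1}{2}\}$ ASDS and the multiset $B-D$ is symmetric.
   Context: A cocycle over a finite group $G$ is a map $\psi:G\times G\to\langle-1\rangle=\{\pm1\}$ with $\psi(g,h)\psi(gh,k)=\psi(g,hk)\psi(h,k)$ for all $g,h,k$; all cocycles are normalized ($\psi(1,1)=1$); they form the group $Z^2(G,\langle-1\rangle)$ under pointwise product. For $\phi:G\to\{\pm1\}$ the coboundary is $\partial\phi(g,h)=\phi(g)^{-1}\phi(h)^{-1}\phi(gh)$; coboundaries form $B^2(G,\langle-1\rangle)$. $M_\psi=[\psi(g,h)]_{g,h\in G}$; the row excess $RE(M_\psi)$ is the sum of absolute values of the row sums of $M_\psi$ over all rows except the one indexed by the identity. If $|G|=4t+2$, $\psi$ is quasi-orthogonal if either $\psi\notin B^2$ and $RE(M_\psi)=4t$, or $\psi\in B^2$ and $RE(M_\psi)=8t+2$. For $G=\mathbb{Z}_2\times\mathbb{Z}_m$ (written additively): order the elements as $g_1=(0,0),g_2=(0,1),\ldots,g_m=(0,m-1),g_{m+1}=(1,0),\ldots,g_{2m}=(1,m-1)$.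 Define $\lambda((a,u),(b,w))=-1$ if $a=b=1$ and $1$ otherwise. For $2\le j\le 2m$ let $\varepsilon_j:G\to\{\pm1\}$ be $-1$ at $g_j$ and $1$ elsewhere, and $\partial_j=\partial\varepsilon_j$, i.e. $\partial_j(g,h)=\varepsilon_j(g)\varepsilon_j(h)\varepsilon_j(g+h)$. Then $\{\lambda,\partial_2,\ldots,\partial_{2m-1}\}$ is a basis of $Z^2(G,\langle-1\rangle)$. For $B,D\subseteq\mathbb{Z}_m$ and $a\ne0$, $N_{B,D}(a)=|\{(x,x')\in B^2: x-x'\equiv a\}|+|\{(y,y')\in D^2: y-y'\equiv a\}|$; $B,D$ are $2$-$\{m;k,r;\mu\}$ ASDS if $|B|=k$, $|D|=r$ and $N_{B,D}(a)\in\{\mu,\mu+1\}$ for all $a\ne0$. The multiset $B-D$ is symmetric if for each $w\in\mathbb{Z}_m$, $|\{(x,y)\in B\times D:x-y\equiv w\}|=|\{(x,y)\in B\times D:x-y\equiv -w\}|$. *)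

theory Defs
  imports "HOL-Number_Theory.Cong"
begin

definition Gset :: "nat \<Rightarrow> (nat \<times> nat) set" where
  "Gset m = {0..<2} \<times> {0..<m}"

definition gadd :: "nat \<Rightarrow> nat \<times> nat \<Rightarrow> nat \<times> nat \<Rightarrow> nat \<times> nat" where
  "gadd m g h = ((fst g + fst h) mod 2, (snd g + snd h) mod m)"

text \<open>Ordering g_1 = (0,0), ..., g_m = (0,m-1), g_(m+1) = (1,0), ..., g_(2m) = (1,m-1).\<close>
definition gelt :: "nat \<Rightarrow> nat \<Rightarrow> nat \<times> nat" where
  "gelt m j = (if j \<le> m then (0, j - 1) else (1, j - m - 1))"

definition lam :: "nat \<times> nat \<Rightarrow> nat \<times> nat \<Rightarrow> int" where
  "lam g h = (if fst g = 1 \<and> fst h = 1 then -1 else 1)"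

definition eps :: "nat \<Rightarrow> nat \<Rightarrow> nat \<times> nat \<Rightarrow> int" where
  "eps m j g = (if g = gelt m j then -1 else 1)"

text \<open>Coboundary of phi : G -> {1,-1}; since values are +-1, phi(g)^(-1) = phi(g).\<close>
definition cobound :: "nat \<Rightarrow> (nat \<times> nat \<Rightarrow> int) \<Rightarrow> nat \<times> nat \<Rightarrow> nat \<times> nat \<Rightarrow> int" where
  "cobound m \<phi> g h = \<phi> g * \<phi> h * \<phi> (gadd m g h)"

definition psi :: "nat \<Rightarrow> (nat \<Rightarrow> nat) \<Rightarrow> nat \<times> nat \<Rightarrow> nat \<times> nat \<Rightarrow> int" where
  "psi m k g h = lam g h * (\<Prod>j\<in>{2..2*m-1}. (cobound m (eps m j) g h) ^ (k j))"

definition is_coboundary :: "nat \<Rightarrow> (nat \<times> nat \<Rightarrow> nat \<times> nat \<Rightarrow> int) \<Rightarrow> bool" where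
  "is_coboundary m \<psi> \<longleftrightarrow> (\<exists>\<phi>. (\<forall>g\<in>Gset m. \<phi> g \<in> {1, -1}) \<and>
      (\<forall>g\<in>Gset m. \<forall>h\<in>Gset m. \<psi> g h = cobound m \<phi> g h))"

definition row_excess :: "nat \<Rightarrow> (nat \<times> nat \<Rightarrow> nat \<times> nat \<Rightarrow> int) \<Rightarrow> int" where
  "row_excess m \<psi> = (\<Sum>g\<in>Gset m - {(0,0)}. \<bar>\<Sum>h\<in>Gset m. \<psi> g h\<bar>)"

definition quasi_orthogonal :: "nat \<Rightarrow> (nat \<times> nat \<Rightarrow> nat \<times> nat \<Rightarrow> int) \<Rightarrow> bool" where
  "quasi_orthogonal m \<psi> \<longleftrightarrow>
     (let t = (int (card (Gset m)) - 2) div 4 in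
       (\<not> is_coboundary m \<psi> \<and> row_excess m \<psi> = 4 * t) \<or>
       (is_coboundary m \<psi> \<and> row_excess m \<psi> = 8 * t + 2))"

definition N_BD :: "nat \<Rightarrow> nat set \<Rightarrow> nat set \<Rightarrow> nat \<Rightarrow> int" where
  "N_BD m B D a = int (card {(x, x'). x \<in> B \<and> x' \<in> B \<and> [int x - int x' = int a] (mod int m)})
                + int (card {(y, y'). y \<in> D \<and> y' \<in> D \<and> [int y - int y' = int a] (mod int m)})"

definition ASDS :: "nat \<Rightarrow> nat \<Rightarrow> nat \<Rightarrow> int \<Rightarrow> nat set \<Rightarrow> nat set \<Rightarrow> bool" where
  "ASDS m k r \<mu> B D \<longleftrightarrow> B \<subseteq> {0..<m} \<and> D \<subseteq> {0..<m} \<and> card B = k \<and> card D = r \<and>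
     (\<forall>a\<in>{1..<m}. N_BD m B D a \<in> {\<mu>, \<mu> + 1})"

definition diff_symmetric :: "nat \<Rightarrow> nat set \<Rightarrow> nat set \<Rightarrow> bool" where
  "diff_symmetric m B D \<longleftrightarrow> (\<forall>w\<in>{0..<m}.
     card {(x, y). x \<in> B \<and> y \<in> D \<and> [int x - int y = int w] (mod int m)} =
     card {(x, y). x \<in> B \<and> y \<in> D \<and> [int x - int y = - int w] (mod int m)})"

end

theory Submission
  imports Defs
begin


definition pI :: "nat set \<Rightarrow> nat \<Rightarrow> int" where
  "pI X u = (if u \<in> X then -1 else 1)"

definition Q :: "nat \<Rightarrow> nat set \<Rightarrow> nat set \<Rightarrow> nat \<Rightarrow> nat" where
  "Q m X Y a = card {(x, y). x \<in> X \<and> y \<in> Y \<and> [int x - int y = int a] (mod int m)}"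

lemma shift_inj:
  fixes a m :: nat
  shows "inj_on (\<lambda>u. (a + u) mod m) {0..<m}"
  proof (rule inj_onI)
    fix u v assume u: "u \<in> {0..<m}" and v: "v \<in> {0..<m}" and e: "(a + u) mod m = (a + v) mod m"
    then have "[a + u = a + v] (mod m)" by (simp add: cong_def)
    then have "[u = v] (mod m)" by (simp add: cong_add_lcancel_nat)
    then show "u = v" using u v by (simp add: cong_def)
  qed

lemma shift_image:
  fixes a m :: nat
  assumes "m > 0"
  shows "(\<lambda>u. (a + u) mod m) ` {0..<m} = {0..<m}"
proof -
  note inj = shift_inj[of a m]
  have sub: "(\<lambda>u. (a + u) mod m) ` {0..<m} \<subseteq> {0..<m}" using assms by auto
  show ?thesis
    by (rule card_subset_eq[OF _ sub]) (auto simp: card_image[OF inj])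
qed

lemma sum_shift:
  fixes a m :: nat
  assumes "m > 0"
  shows "(\<Sum>u\<in>{0..<m}. g ((a + u) mod m)) = (\<Sum>u\<in>{0..<m}. (g u :: int))"
proof -
  have inj: "inj_on (\<lambda>u. (a + u) mod m) {0..<m}"
    by (rule shift_inj)
  have "(\<Sum>u\<in>{0..<m}. g u) = (\<Sum>u\<in>(\<lambda>u. (a + u) mod m) ` {0..<m}. g u)"
    using shift_image[OF assms] by simp
  also have "\<dots> = (\<Sum>u\<in>{0..<m}. g ((a + u) mod m))"
    by (simp add: sum.reindex[OF inj])
  finally show ?thesis by simp
qed

lemma Q_card:
  assumes "m > 0" "X \<subseteq> {0..<m}" "Y \<subseteq> {0..<m}"
  shows "Q m X Y a = card {u\<in>{0..<m}. (a + u) mod m \<in> X \<and> u \<in> Y}"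
proof -
  have eq: "{(x, y). x \<in> X \<and> y \<in> Y \<and> [int x - int y = int a] (mod int m)}
     = (\<lambda>u. ((a + u) mod m, u)) ` {u\<in>{0..<m}. (a + u) mod m \<in> X \<and> u \<in> Y}"
  proof (rule set_eqI, rule iffI)
    fix p assume p: "p \<in> {(x, y). x \<in> X \<and> y \<in> Y \<and> [int x - int y = int a] (mod int m)}"
    obtain x y where pxy: "p = (x, y)" by (cases p)
    have xX: "x \<in> X" and yY: "y \<in> Y" and c: "[int x - int y = int a] (mod int m)" using p pxy by auto
    have xm: "x < m" "y < m" using xX yY assms by auto
    have "[int x = int a + int y] (mod int m)" using c
      by (metis add.commute cong_add_lcancel diff_add_cancel)
    then have "int x mod int m = (int a + int y) mod int m" by (simp add: cong_def)
    then have "int x = int ((a + y) mod m)" using xm by (simp add: zmod_int)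
    then have "x = (a + y) mod m" by simp
    then show "p \<in> (\<lambda>u. ((a + u) mod m, u)) ` {u\<in>{0..<m}. (a + u) mod m \<in> X \<and> u \<in> Y}"
      using pxy xX yY xm by auto
  next
    fix p assume "p \<in> (\<lambda>u. ((a + u) mod m, u)) ` {u\<in>{0..<m}. (a + u) mod m \<in> X \<and> u \<in> Y}"
    then obtain u where u: "u < m" "(a + u) mod m \<in> X" "u \<in> Y" and pu: "p = ((a + u) mod m, u)" by auto
    have "[int ((a + u) mod m) = int a + int u] (mod int m)"
      by (simp add: cong_def zmod_int)
    then have "[int ((a + u) mod m) - int u = int a] (mod int m)"
      by (metis add_diff_cancel_right' cong_diff cong_refl)
    then show "p \<in> {(x, y). x \<in> X \<and> y \<in> Y \<and> [int x - int y = int a] (mod int m)}"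
      using u pu by auto
  qed
  have inj: "inj_on (\<lambda>u. ((a + u) mod m, u)) A" for A by (rule inj_onI) auto
  show ?thesis unfolding Q_def eq by (rule card_image[OF inj])
qed

lemma L:
  assumes "m > 0" "X \<subseteq> {0..<m}" "Y \<subseteq> {0..<m}"
  shows "(\<Sum>u\<in>{0..<m}. pI X ((a + u) mod m) * pI Y u)
       = int m - 2 * int (card X) - 2 * int (card Y) + 4 * int (Q m X Y a)"
proof -
  have e: "pI X v * pI Y u = 1 - 2 * of_bool (v \<in> X) - 2 * of_bool (u \<in> Y) + 4 * of_bool (v \<in> X \<and> u \<in> Y)" for u v
    by (simp add: pI_def)
  have s1: "(\<Sum>u\<in>{0..<m}. (of_bool ((a + u) mod m \<in> X) :: int)) = int (card X)"
  proof -
    have "(\<Sum>u\<in>{0..<m}. (of_bool ((a + u) mod m \<in> X) :: int)) = (\<Sum>u\<in>{0..<m}. (of_bool (u \<in> X) :: int))"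
      by (rule sum_shift[OF assms(1)])
    also have "\<dots> = int (card ({0..<m} \<inter> X))" by simp
    also have "{0..<m} \<inter> X = X" using assms by auto
    finally show ?thesis .
  qed
  have s2: "(\<Sum>u\<in>{0..<m}. (of_bool (u \<in> Y) :: int)) = int (card Y)"
  proof -
    have "(\<Sum>u\<in>{0..<m}. (of_bool (u \<in> Y) :: int)) = int (card ({0..<m} \<inter> Y))" by simp
    also have "{0..<m} \<inter> Y = Y" using assms by auto
    finally show ?thesis .
  qed
  have s3: "(\<Sum>u\<in>{0..<m}. (of_bool ((a + u) mod m \<in> X \<and> u \<in> Y) :: int)) = int (Q m X Y a)"
  proof -
    have "(\<Sum>u\<in>{0..<m}. (of_bool ((a + u) mod m \<in> X \<and> u \<in> Y) :: int))
        = int (card ({0..<m} \<inter> {u. (a + u) mod m \<in> X \<and> u \<in> Y}))" by simp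
    also have "{0..<m} \<inter> {u. (a + u) mod m \<in> X \<and> u \<in> Y} = {u\<in>{0..<m}. (a + u) mod m \<in> X \<and> u \<in> Y}" by auto
    finally show ?thesis using Q_card[OF assms] by simp
  qed
  show ?thesis
    unfolding e by (simp add: sum.distrib sum_subtractf sum_distrib_left[symmetric] s1 s2 s3)
qed



definition fv :: "nat \<Rightarrow> (nat \<Rightarrow> nat) \<Rightarrow> nat \<times> nat \<Rightarrow> int" where
  "fv m k g = (\<Prod>j\<in>{2..2*m-1}. eps m j g ^ k j)"

lemma psi_eq: "psi m k g h = lam g h * fv m k g * fv m k h * fv m k (gadd m g h)"
  unfolding psi_def fv_def cobound_def power_mult_distrib prod.distrib by (simp only: mult.assoc)

lemma gelt_inj: "1 \<le> i \<Longrightarrow> 1 \<le> j \<Longrightarrow> gelt m i = gelt m j \<Longrightarrow> i = j"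
  unfolding gelt_def by (auto split: if_splits)

lemma fv_eq:
  assumes kb: "\<forall>j\<in>{2..2*m-1}. k j \<in> {0, 1}"
  shows "fv m k g = (if (\<exists>j. j \<in> {2..2*m-1} \<and> k j = 1 \<and> gelt m j = g) then -1 else 1)"
proof -
  let ?J = "{2..2*m-1}"
  let ?S = "{j\<in>?J. gelt m j = g \<and> k j = 1}"
  have t: "eps m j g ^ k j = (-1) ^ (of_bool (gelt m j = g \<and> k j = 1))" if "j \<in> ?J" for j
  proof -
    have "k j = 0 \<or> k j = 1" using kb that by auto
    then show ?thesis by (auto simp: eps_def)
  qed
  have "fv m k g = (\<Prod>j\<in>?J. (-1::int) ^ (of_bool (gelt m j = g \<and> k j = 1)))"
    unfolding fv_def by (rule prod.cong) (simp_all add: t)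
  also have "\<dots> = (-1) ^ (\<Sum>j\<in>?J. of_bool (gelt m j = g \<and> k j = 1))"
    by (rule power_sum[symmetric])
  also have "(\<Sum>j\<in>?J. (of_bool (gelt m j = g \<and> k j = 1) :: nat)) = card ?S"
    by (subst sum_of_bool_eq) (auto intro!: arg_cong[where f=card])
  also have "(-1::int) ^ card ?S = (if (\<exists>j. j \<in> ?J \<and> k j = 1 \<and> gelt m j = g) then -1 else 1)"
  proof -
    have le: "card ?S \<le> Suc 0"
    proof (subst card_le_Suc0_iff_eq, simp, intro ballI)
      fix x y assume "x \<in> ?S" "y \<in> ?S" then show "x = y" using gelt_inj[of x y m] by auto
    qed
    show ?thesis
    proof (cases "\<exists>j. j \<in> ?J \<and> k j = 1 \<and> gelt m j = g")
      case True
      then have "?S \<noteq> {}" by auto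
      then have "card ?S \<noteq> 0" by simp
      then have "card ?S = 1" using le by linarith
      then show ?thesis using True by simp
    next
      case False
      then have "?S = {}" by auto
      then have c: "card ?S = 0" by (simp only: card.empty)
      show ?thesis by (subst c) (use False in simp)
    qed
  qed
  finally show ?thesis .
qed

lemma fv0:
  assumes kb: "\<forall>j\<in>{2..2*m-1}. k j \<in> {0, 1}" and m: "m > 1"
    and B: "B = {j - 1 | j. 2 \<le> j \<and> j \<le> m \<and> k j = 1}"
  shows "fv m k (0, u) = pI B u"
proof -
  have "(\<exists>j. j \<in> {2..2*m-1} \<and> k j = 1 \<and> gelt m j = (0, u)) \<longleftrightarrow> u \<in> B"
    unfolding B gelt_def using m by (auto split: if_splits)
  then show ?thesis using fv_eq[OF kb] by (simp add: pI_def)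
qed

lemma fv1:
  assumes kb: "\<forall>j\<in>{2..2*m-1}. k j \<in> {0, 1}" and m: "m > 1"
    and D: "D = {j - m - 1 | j. m + 1 \<le> j \<and> j \<le> 2*m - 1 \<and> k j = 1}"
  shows "fv m k (1, u) = pI D u"
proof -
  have "(\<exists>j. j \<in> {2..2*m-1} \<and> k j = 1 \<and> gelt m j = (1, u)) \<longleftrightarrow> u \<in> D"
    unfolding D gelt_def using m by (auto split: if_splits) (rule_tac x=j in exI, auto)
  then show ?thesis using fv_eq[OF kb] by (simp add: pI_def)
qed



lemma pI_sq: "pI X u * pI X u = 1" by (simp add: pI_def)
lemma pI_abs: "\<bar>pI X u\<bar> = 1" by (simp add: pI_def)
lemma pI_cases: "pI X u = 1 \<or> pI X u = -1" by (simp add: pI_def)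

lemma sumG: "(\<Sum>h\<in>Gset m. F h) = (\<Sum>u\<in>{0..<m}. F (0, u)) + (\<Sum>u\<in>{0..<m}. (F (1, u) :: int))"
proof -
  have "(\<Sum>h\<in>Gset m. F h) = (\<Sum>(x, y)\<in>{0..<2} \<times> {0..<m}. F (x, y))"
    unfolding Gset_def by (simp add: case_prod_beta')
  also have "\<dots> = (\<Sum>x\<in>{0..<2}. \<Sum>y\<in>{0..<m}. F (x, y))"
    by (rule sum.cartesian_product[symmetric])
  also have "{0..<2::nat} = {0, 1}" by auto
  finally show ?thesis by simp
qed

lemma sumG':
  assumes "m > 0"
  shows "(\<Sum>h\<in>Gset m - {(0,0)}. F h) = (\<Sum>u\<in>{1..<m}. F (0, u)) + (\<Sum>u\<in>{0..<m}. (F (1, u) :: int))"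
proof -
  have fin: "finite (Gset m)" unfolding Gset_def by simp
  have mem: "(0,0) \<in> Gset m" using assms unfolding Gset_def by simp
  have "(\<Sum>h\<in>Gset m - {(0,0)}. F h) = (\<Sum>h\<in>Gset m. F h) - F (0,0)"
    by (subst sum_diff1[OF fin]) (simp add: mem)
  also have "(\<Sum>u\<in>{0..<m}. F (0, u)) = F (0,0) + (\<Sum>u\<in>{1..<m}. F (0, u))"
    using sum.atLeast_Suc_lessThan[OF assms, of "\<lambda>u. F (0,u)"] by simp
  ultimately show ?thesis by (simp add: sumG)
qed

lemma cong_neg_swap: "[int x - int y = - int a] (mod n) \<longleftrightarrow> [int y - int x = int a] (mod n)"
  by (metis cong_minus_minus_iff minus_diff_eq)

lemma Q_swap: "Q m D B a = card {(x, y). x \<in> B \<and> y \<in> D \<and> [int x - int y = - int a] (mod int m)}"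
proof -
  have "{(x, y). x \<in> D \<and> y \<in> B \<and> [int x - int y = int a] (mod int m)}
      = prod.swap ` {(x, y). x \<in> B \<and> y \<in> D \<and> [int x - int y = - int a] (mod int m)}"
    by (auto simp: cong_neg_swap image_iff)
  then show ?thesis unfolding Q_def by (simp add: card_image)
qed

locale setting =
  fixes m :: nat and k :: "nat \<Rightarrow> nat" and B D :: "nat set"
  assumes odd: "odd m" and m1: "m > 1"
    and kb: "\<forall>j\<in>{2..2*m-1}. k j \<in> {0, 1}"
    and B: "B = {j - 1 | j. 2 \<le> j \<and> j \<le> m \<and> k j = 1}"
    and D: "D = {j - m - 1 | j. m + 1 \<le> j \<and> j \<le> 2*m - 1 \<and> k j = 1}"
begin

lemma m0: "m > 0" using m1 by simp
lemma Bsub: "B \<subseteq> {0..<m}" unfolding B by auto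
lemma Dsub: "D \<subseteq> {0..<m}" unfolding D by auto

lemma f0: "fv m k (0, u) = pI B u" by (rule fv0[OF kb m1 B])
lemma f1: "fv m k (1, u) = pI D u" by (rule fv1[OF kb m1 D])
lemma f1': "fv m k (Suc 0, u) = pI D u" using f1 by simp

lemma row0:
  "(\<Sum>h\<in>Gset m. psi m k (0, a) h) = pI B a *
     (2 * int m - 4 * (int (card B) + int (card D)) + 4 * N_BD m B D a)"
proof -
  have e0: "psi m k (0, a) (0, u) = pI B a * (pI B ((a + u) mod m) * pI B u)" for u
    by (simp add: psi_eq lam_def gadd_def f0 mult_ac)
  have e1: "psi m k (0, a) (1, u) = pI B a * (pI D ((a + u) mod m) * pI D u)" for u
    by (simp add: psi_eq lam_def gadd_def f0 f1 f1' mult_ac)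
  have N: "N_BD m B D a = int (Q m B B a) + int (Q m D D a)"
    unfolding N_BD_def Q_def by simp
  show ?thesis
    unfolding sumG e0 e1 sum_distrib_left[symmetric] L[OF m0 Bsub Bsub] L[OF m0 Dsub Dsub] N
    by (simp add: algebra_simps)
qed

lemma row1:
  "(\<Sum>h\<in>Gset m. psi m k (1, a) h) = pI D a * (4 * (int (Q m D B a) - int (Q m B D a)))"
proof -
  have e0: "psi m k (1, a) (0, u) = pI D a * (pI D ((a + u) mod m) * pI B u)" for u
    by (simp add: psi_eq lam_def gadd_def f0 f1 f1' mult_ac)
  have e1: "psi m k (1, a) (1, u) = - (pI D a * (pI B ((a + u) mod m) * pI D u))" for u
    by (simp add: psi_eq lam_def gadd_def f0 f1 f1' mult_ac)
  show ?thesis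
    unfolding sumG e0 e1 sum_negf sum_distrib_left[symmetric] L[OF m0 Bsub Dsub] L[OF m0 Dsub Bsub]
    by (simp add: algebra_simps)
qed

lemma not_cob: "\<not> is_coboundary m (psi m k)"
proof
  assume "is_coboundary m (psi m k)"
  then obtain \<phi> where ph: "\<forall>g\<in>Gset m. \<phi> g \<in> {1, -1}"
    and eq: "\<forall>g\<in>Gset m. \<forall>h\<in>Gset m. psi m k g h = cobound m \<phi> g h"
    unfolding is_coboundary_def by blast
  have g0: "(0,0) \<in> Gset m" and g1: "(1,0) \<in> Gset m" using m0 by (auto simp: Gset_def)
  have a: "psi m k (0,0) (0,0) = cobound m \<phi> (0,0) (0,0)" using eq g0 by blast
  have b: "psi m k (1,0) (1,0) = cobound m \<phi> (1,0) (1,0)" using eq g1 by blast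
  have a': "pI B 0 * pI B 0 * pI B 0 = \<phi> (0,0) * \<phi> (0,0) * \<phi> (0,0)"
    using a by (simp add: psi_eq lam_def gadd_def cobound_def f0)
  have b': "- (pI D 0 * pI D 0 * pI B 0) = \<phi> (1,0) * \<phi> (1,0) * \<phi> (0,0)"
    using b by (simp add: psi_eq lam_def gadd_def cobound_def f0 f1 f1')
  have p0: "\<phi> (0,0) \<in> {1,-1}" and p1: "\<phi> (1,0) \<in> {1,-1}" using ph g0 g1 by auto
  show False using a' b' p0 p1 pI_cases[of B 0] pI_cases[of D 0] by auto
qed

lemma RE: "row_excess m (psi m k) =
   (\<Sum>a\<in>{1..<m}. \<bar>2 * int m - 4 * (int (card B) + int (card D)) + 4 * N_BD m B D a\<bar>)
 + (\<Sum>a\<in>{0..<m}. \<bar>4 * (int (Q m D B a) - int (Q m B D a))\<bar>)"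
  unfolding row_excess_def sumG'[OF m0] row0 row1 by (simp add: abs_mult pI_abs)

lemma main:
  "quasi_orthogonal m (psi m k) \<longleftrightarrow>
     ASDS m (card B) (card D) (int (card B) + int (card D) - int ((m + 1) div 2)) B D
     \<and> diff_symmetric m B D"
proof -
  obtain c where mc: "m = 2 * c + 1" using odd oddE by blast
  have cardG: "card (Gset m) = 2 * m" unfolding Gset_def by (simp add: card_cartesian_product)
  have t0: "int (card (Gset m)) - 2 = 4 * int c" using cardG mc by simp
  have t: "(int (card (Gset m)) - 2) div 4 = int c" unfolding t0 by simp
  have qo: "quasi_orthogonal m (psi m k) \<longleftrightarrow> row_excess m (psi m k) = 2 * int m - 2"
    unfolding quasi_orthogonal_def Let_def t using not_cob mc by auto
  define \<mu> where "\<mu> = int (card B) + int (card D) - int ((m + 1) div 2)"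
  define T where "T a = 2 * int m - 4 * (int (card B) + int (card D)) + 4 * N_BD m B D a" for a
  define E where "E a = \<bar>4 * (int (Q m D B a) - int (Q m B D a))\<bar>" for a
  have mu2: "int ((m + 1) div 2) = int c + 1" unfolding mc by simp
  have T4: "T a = 4 * (N_BD m B D a - \<mu>) - 2" for a
    unfolding T_def \<mu>_def mu2 using mc by simp
  have Tge: "\<bar>T a\<bar> - 2 \<ge> 0" for a unfolding T4 by arith
  have Tiff: "\<bar>T a\<bar> - 2 = 0 \<longleftrightarrow> N_BD m B D a \<in> {\<mu>, \<mu> + 1}" for a
    unfolding T4 by auto
  have cm: "card {1..<m} = m - 1" by simp
  have S1: "(\<Sum>a\<in>{1..<m}. \<bar>T a\<bar>) = (\<Sum>a\<in>{1..<m}. \<bar>T a\<bar> - 2) + (2 * int m - 2)"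
    using m1 by (simp add: sum_subtractf of_nat_diff)
  have "row_excess m (psi m k) = (\<Sum>a\<in>{1..<m}. \<bar>T a\<bar> - 2) + (\<Sum>a\<in>{0..<m}. E a) + (2 * int m - 2)"
    unfolding RE T_def[symmetric] E_def[symmetric] S1 by simp
  then have "quasi_orthogonal m (psi m k) \<longleftrightarrow>
      (\<Sum>a\<in>{1..<m}. \<bar>T a\<bar> - 2) + (\<Sum>a\<in>{0..<m}. E a) = 0"
    unfolding qo by simp
  also have "\<dots> \<longleftrightarrow> (\<Sum>a\<in>{1..<m}. \<bar>T a\<bar> - 2) = 0 \<and> (\<Sum>a\<in>{0..<m}. E a) = 0"
  proof -
    have "(\<Sum>a\<in>{1..<m}. \<bar>T a\<bar> - 2) \<ge> 0" by (rule sum_nonneg) (rule Tge)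
    moreover have "(\<Sum>a\<in>{0..<m}. E a) \<ge> 0" unfolding E_def by (rule sum_nonneg) simp
    ultimately show ?thesis by linarith
  qed
  also have "\<dots> \<longleftrightarrow> (\<forall>a\<in>{1..<m}. \<bar>T a\<bar> - 2 = 0) \<and> (\<forall>a\<in>{0..<m}. E a = 0)"
  proof -
    have A: "(\<Sum>a\<in>{1..<m}. \<bar>T a\<bar> - 2) = 0 \<longleftrightarrow> (\<forall>a\<in>{1..<m}. \<bar>T a\<bar> - 2 = 0)"
      using Tge by (intro sum_nonneg_eq_0_iff) auto
    have B': "(\<Sum>a\<in>{0..<m}. E a) = 0 \<longleftrightarrow> (\<forall>a\<in>{0..<m}. E a = 0)"
      unfolding E_def by (intro sum_nonneg_eq_0_iff) auto
    show ?thesis using A B' by simp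
  qed
  also have "\<dots> \<longleftrightarrow> ASDS m (card B) (card D) \<mu> B D \<and> diff_symmetric m B D"
  proof -
    have Eiff: "E a = 0 \<longleftrightarrow>
      card {(x, y). x \<in> B \<and> y \<in> D \<and> [int x - int y = int a] (mod int m)} =
      card {(x, y). x \<in> B \<and> y \<in> D \<and> [int x - int y = - int a] (mod int m)}" (is "_ \<longleftrightarrow> ?R") for a
    proof -
      have "E a = 0 \<longleftrightarrow> Q m D B a = Q m B D a" unfolding E_def by simp
      also have "\<dots> \<longleftrightarrow> ?R"
        unfolding Q_swap[of m D B a] unfolding Q_def by (rule eq_commute)
      finally show ?thesis .
    qed
    show ?thesis
      unfolding ASDS_def diff_symmetric_def Tiff Eiff using Bsub Dsub by auto
  qed
  finally show ?thesis unfolding \<mu>_def .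
qed

end

theorem theorem4:
  fixes m :: nat and k :: "nat \<Rightarrow> nat"
  assumes "odd m" and "m > 1"
    and "\<forall>j\<in>{2..2*m-1}. k j \<in> {0, 1}"
  shows "quasi_orthogonal m (psi m k) \<longleftrightarrow>
    (let B = {j - 1 | j. 2 \<le> j \<and> j \<le> m \<and> k j = 1};
         D = {j - m - 1 | j. m + 1 \<le> j \<and> j \<le> 2*m - 1 \<and> k j = 1}
     in ASDS m (card B) (card D) (int (card B) + int (card D) - int ((m + 1) div 2)) B D
        \<and> diff_symmetric m B D)"
proof -
  define B where "B = {j - 1 | j. 2 \<le> j \<and> j \<le> m \<and> k j = 1}"
  define D where "D = {j - m - 1 | j. m + 1 \<le> j \<and> j \<le> 2*m - 1 \<and> k j = 1}"
  interpret setting m k B D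
    using assms by unfold_locales (simp_all add: B_def D_def)
  show ?thesis unfolding Let_def B_def[symmetric] D_def[symmetric] by (rule main)
qed

end
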